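(* In the setting below, for each $v\in\mathbb{R}^d$ and $n\in\mathbb{N}_0$, $$\min_{j=1,\dots,N}\langle x_j(t_{2n+2}),v\rangle\le\langle x_i(t),v\rangle\le\max_{j=1,\dots,N}\langle x_j(t_{2n+2}),v\rangle$$ for all $t\in[t_{2n+1},t_{2n+2}]$ and $i=1,\dots,N$.
   Context: Setting: $N\ge2$; $\psi:\mathbb{R}^d\times\mathbb{R}^d\to\mathbb{R}$ positive, bounded, continuous, $K:=\|\psi\|_\infty$; $\{t_n\}_{n\in\mathbb{N}_0}$ increasing, nonnegative, $t_0=0$, $t_n\to\infty$; $\alpha(0)=1$, $\alpha=1$ on $(t_{2n},t_{2n+1})$, $\alpha=-1$ on $[t_{2n+1},t_{2n+2}]$; $\{x_i\}$ solves $x_i'(t)=\frac1{N-1}\sum_{j\ne i}\alpha(t)\psi(x_i(t),x_j(t))(x_j(t)-x_i(t))$, $t>0$, $x_i(0)=x_i^0\in\mathbb{R}^d$ (continuous, $C^1$ on each $(t_n,t_{n+1})$). Standing assumptions: $t_{2n+2}-t_{2n+1}<\frac{\ln 2}{K}$ for all $n$; $\sum_{p\ge0}\ln\frac{e^{K(t_{2p+2}-t_{2p+1})}}{2-e^{K(t_{2p+2}-t_{2p+1})}}<\infty$; $\sum_{p\ge0}\ln\max\{1-e^{-K(t_{2p+1}-t_{2p})},1-\frac{\psi_0}{K}(1-e^{-K(t_{2p+1}-t_{2p})})\}=-\infty$, with $\psi_0=\min_{|y|,|z|\le M^0}\psi(y,z)$, $M^0=e^{K\sum_{p}(t_{2p+2}-t_{2p+1})}\max_i|x_i^0|$.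 *)

theory Defs
  imports "HOL-Analysis.Analysis"
begin

definition sw_alpha :: "(nat \<Rightarrow> real) \<Rightarrow> real \<Rightarrow> real" where
  "sw_alpha t s = (if \<exists>n. t (2*n+1) \<le> s \<and> s \<le> t (2*n+2) then -1 else 1)"

definition psiK :: "('a \<Rightarrow> 'a \<Rightarrow> real) \<Rightarrow> real" where
  "psiK psi = (SUP p. \<bar>psi (fst p) (snd p)\<bar>)"

definition M0 :: "real \<Rightarrow> (nat \<Rightarrow> real) \<Rightarrow> nat \<Rightarrow> (nat \<Rightarrow> 'a::real_normed_vector) \<Rightarrow> real" where
  "M0 K t N x0 = exp (K * (\<Sum>p. t (2*p+2) - t (2*p+1))) * (MAX i\<in>{..<N}. norm (x0 i))"

definition psi0 :: "('a::real_normed_vector \<Rightarrow> 'a \<Rightarrow> real) \<Rightarrow> real \<Rightarrow> real" where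
  "psi0 psi M = Inf {psi y z | y z. norm y \<le> M \<and> norm z \<le> M}"

end

theory Submission
  imports Defs
begin

lemma core:
  fixes f :: "nat \<Rightarrow> real \<Rightarrow> real" and a b M :: real
  assumes cont: "\<And>k. k < N \<Longrightarrow> continuous_on {a..b} (f k)"
    and der: "\<And>k s. k < N \<Longrightarrow> s \<in> {a<..<b} \<Longrightarrow> (\<forall>l<N. f l s \<le> f k s) \<Longrightarrow>
              \<exists>D\<ge>0. (f k has_real_derivative D) (at s)"
    and endb: "\<And>k. k < N \<Longrightarrow> f k b \<le> M"
    and i: "i < N" and s0: "s0 \<in> {a..b}"
  shows "f i s0 \<le> M"
proof (rule field_le_epsilon)
  have key: "f i s0 \<le> M + \<epsilon> * (1 + b - s0)" if eps: "\<epsilon> > 0" for \<epsilon>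
  proof (rule ccontr)
    define w where "w s = M + \<epsilon> * (1 + b - s)" for s
    assume "\<not> ?thesis"
    hence fi: "f i s0 > w s0" by (simp add: w_def)
    have wb: "\<And>k. k < N \<Longrightarrow> f k b < w b" using endb eps by (force simp: w_def)
    have s0b: "s0 < b" using fi wb[OF i] s0 by (cases "s0 = b") auto
    have wc: "continuous_on S w" for S unfolding w_def by (intro continuous_intros)
    have contS: "continuous_on {s0..b} (f k)" if "k < N" for k
      using cont[OF that] continuous_on_subset s0 by fastforce
    define Z where "Z = (\<Union>k\<in>{..<N}. {s\<in>{s0..b}. w s \<le> f k s})"
    have Zc: "closed Z" unfolding Z_def
      by (intro closed_UN finite_lessThan ballI continuous_on_closed_Collect_le wc contS) auto
    have s0Z: "s0 \<in> Z" unfolding Z_def using i fi s0b by force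
    have Zb: "bdd_above Z" unfolding Z_def by (auto intro!: bdd_aboveI[where M=b])
    define ss where "ss = Sup Z"
    have ssZ: "ss \<in> Z" unfolding ss_def using closed_contains_Sup[OF _ Zb Zc] s0Z by blast
    then obtain j where j: "j < N" "w ss \<le> f j ss" and ssr: "s0 \<le> ss" "ss \<le> b"
      unfolding Z_def by auto
    have after: "f k r < w r" if "k < N" "r \<in> {ss<..b}" for k r
    proof (rule ccontr)
      assume "\<not> ?thesis"
      hence "r \<in> Z" unfolding Z_def using that ssr by force
      hence "r \<le> ss" unfolding ss_def using Zb by (simp add: cSup_upper)
      thus False using that by auto
    qed
    have ssb: "ss < b" using j wb[OF j(1)] ssr by (cases "ss = b") auto
    have atss: "f k ss \<le> w ss" if k: "k < N" for k
    proof -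
      have "closed {r \<in> {ss..b}. f k r \<le> w r}"
        using contS[OF k] ssr by (intro continuous_on_closed_Collect_le wc) (auto intro: continuous_on_subset)
      moreover have "{ss<..b} \<subseteq> {r \<in> {ss..b}. f k r \<le> w r}" using after[OF k] by force
      ultimately have "closure {ss<..b} \<subseteq> {r \<in> {ss..b}. f k r \<le> w r}"
        by (rule closure_minimal[rotated])
      hence "ss \<in> {r \<in> {ss..b}. f k r \<le> w r}" using closure_greaterThanAtMost[OF ssb] ssb by (metis (no_types, lifting) atLeastAtMost_iff order_refl less_imp_le subsetD)
      thus ?thesis by simp
    qed
    have eq: "f j ss = w ss" using atss[OF j(1)] j(2) by simp
    have "ss \<noteq> s0" using atss[OF i] fi by auto
    hence ssa: "ss \<in> {a<..<b}" using ssr ssb s0 by auto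
    have "\<forall>l<N. f l ss \<le> f j ss" using atss eq by simp
    then obtain D where D: "D \<ge> 0" "(f j has_real_derivative D) (at ss)" using der[OF j(1) ssa] by blast
    have wd: "(w has_real_derivative (- \<epsilon>)) (at ss)" unfolding w_def
      by (auto intro!: derivative_eq_intros)
    have gd: "((\<lambda>r. f j r - w r) has_real_derivative (D - - \<epsilon>)) (at ss)"
      by (intro DERIV_diff D(2) wd)
    obtain d where d: "d > 0" "\<forall>h>0. h < d \<longrightarrow> f j ss - w ss < f j (ss + h) - w (ss + h)"
      using DERIV_pos_inc_right[OF gd] D eps by auto
    define h where "h = min (d/2) (b - ss)"
    have h: "h > 0" "h < d" "ss + h \<in> {ss<..b}" using d ssb unfolding h_def by auto
    have "f j (ss + h) > w (ss + h)" using d(2) h eq by force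
    thus False using after[OF j(1) h(3)] by simp
  qed
  fix e :: real assume e: "e > 0"
  have pos: "1 + b - s0 > 0" using s0 by auto
  have "f i s0 \<le> M + (e / (1 + b - s0)) * (1 + b - s0)"
    using key[of "e / (1 + b - s0)"] e pos by simp
  thus "f i s0 \<le> M + e" using pos by simp
qed

theorem lemma3p4:
  fixes N :: nat
    and psi :: "'a::euclidean_space \<Rightarrow> 'a \<Rightarrow> real"
    and t :: "nat \<Rightarrow> real"
    and x :: "nat \<Rightarrow> real \<Rightarrow> 'a"
  assumes N2: "N \<ge> 2"
    and psi_pos: "\<And>y z. psi y z > 0"
    and psi_bdd: "bdd_above (range (\<lambda>p. psi (fst p) (snd p)))"
    and psi_cont: "continuous_on UNIV (\<lambda>p. psi (fst p) (snd p))"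
    and t_mono: "strict_mono t"
    and t0: "t 0 = 0"
    and t_lim: "filterlim t at_top sequentially"
    and x_cont: "\<And>i. i < N \<Longrightarrow> continuous_on {0..} (x i)"
    and x_ode: "\<And>i n s. i < N \<Longrightarrow> s \<in> {t n<..<t (Suc n)} \<Longrightarrow>
        (x i has_vector_derivative
           (1 / real (N - 1)) *\<^sub>R
             (\<Sum>j\<in>{..<N} - {i}. (sw_alpha t s * psi (x i s) (x j s)) *\<^sub>R (x j s - x i s))) (at s)"
    and A1: "\<And>n. t (2*n+2) - t (2*n+1) < ln 2 / psiK psi"
    and A2: "summable (\<lambda>p. ln (exp (psiK psi * (t (2*p+2) - t (2*p+1)))
                           / (2 - exp (psiK psi * (t (2*p+2) - t (2*p+1))))))"
    and A3: "filterlim (\<lambda>m. \<Sum>p<m. ln (max (1 - exp (- psiK psi * (t (2*p+1) - t (2*p))))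
               (1 - psi0 psi (M0 (psiK psi) t N (\<lambda>i. x i 0)) / psiK psi
                    * (1 - exp (- psiK psi * (t (2*p+1) - t (2*p)))))))
             at_bot sequentially"
  shows "\<forall>v n s i. s \<in> {t (2*n+1)..t (2*n+2)} \<and> i < N \<longrightarrow>
           (MIN j\<in>{..<N}. x j (t (2*n+2)) \<bullet> v) \<le> x i s \<bullet> v \<and>
           x i s \<bullet> v \<le> (MAX j\<in>{..<N}. x j (t (2*n+2)) \<bullet> v)"
proof (intro allI impI)
  have tnn: "t m \<ge> 0" for m using t0 t_mono by (metis le0 strict_mono_less_eq)
  have upper: "x i s \<bullet> v \<le> (MAX j\<in>{..<N}. x j (t (2*n+2)) \<bullet> v)"
    if i: "i < N" and s: "s \<in> {t (2*n+1)..t (2*n+2)}" for v n s i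
  proof (rule core[where f="\<lambda>k s. x k s \<bullet> v" and N=N and a="t (2*n+1)" and b="t (2*n+2)"])
    show "continuous_on {t (2*n+1)..t (2*n+2)} (\<lambda>s. x k s \<bullet> v)" if "k < N" for k
    proof -
      have "continuous_on {t (2*n+1)..t (2*n+2)} (x k)"
        using x_cont[OF that] by (rule continuous_on_subset) (use tnn in auto)
      thus ?thesis by (intro continuous_intros)
    qed
    show "x k (t (2*n+2)) \<bullet> v \<le> (MAX j\<in>{..<N}. x j (t (2*n+2)) \<bullet> v)" if "k < N" for k
      using that by (intro Max_ge) auto
    show "i < N" by fact
    show "s \<in> {t (2*n+1)..t (2*n+2)}" by fact
    fix k r assume k: "k < N" and r: "r \<in> {t (2*n+1)<..<t (2*n+2)}"
      and mx: "\<forall>l<N. x l r \<bullet> v \<le> x k r \<bullet> v"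
    have r': "r \<in> {t (2*n+1)<..<t (Suc (2*n+1))}" using r by simp
    have sw: "sw_alpha t r = -1" unfolding sw_alpha_def using r by (auto intro!: exI[of _ n])
    define D where "D = ((1 / real (N - 1)) *\<^sub>R
             (\<Sum>j\<in>{..<N} - {k}. (sw_alpha t r * psi (x k r) (x j r)) *\<^sub>R (x j r - x k r))) \<bullet> v"
    have "((\<lambda>s. x k s \<bullet> v) has_vector_derivative D) (at r)"
      unfolding D_def
      by (rule bounded_linear.has_vector_derivative[OF bounded_linear_inner_left x_ode[OF k r']])
    hence dd: "((\<lambda>s. x k s \<bullet> v) has_real_derivative D) (at r)"
      by (simp add: has_real_derivative_iff_has_vector_derivative)
    have "D = (1 / real (N - 1)) * (\<Sum>j\<in>{..<N} - {k}. psi (x k r) (x j r) * (x k r \<bullet> v - x j r \<bullet> v))"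
      unfolding D_def sw by (simp add: inner_sum_left inner_diff_left algebra_simps)
    moreover have "(\<Sum>j\<in>{..<N} - {k}. psi (x k r) (x j r) * (x k r \<bullet> v - x j r \<bullet> v)) \<ge> 0"
      using mx psi_pos by (intro sum_nonneg) (simp add: less_imp_le)
    ultimately have "D \<ge> 0" by simp
    thus "\<exists>D\<ge>0. ((\<lambda>s. x k s \<bullet> v) has_real_derivative D) (at r)" using dd by blast
  qed
  fix v n s i assume H: "s \<in> {t (2*n+1)..t (2*n+2)} \<and> i < N"
  have ne: "{..<N} \<noteq> {}" using N2 lessThan_empty_iff by (metis not_numeral_le_zero)
  show "(MIN j\<in>{..<N}. x j (t (2*n+2)) \<bullet> v) \<le> x i s \<bullet> v \<and>
           x i s \<bullet> v \<le> (MAX j\<in>{..<N}. x j (t (2*n+2)) \<bullet> v)"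
  proof
    show "x i s \<bullet> v \<le> (MAX j\<in>{..<N}. x j (t (2*n+2)) \<bullet> v)" using upper H by blast
    have u: "x i s \<bullet> (-v) \<le> (MAX j\<in>{..<N}. x j (t (2*n+2)) \<bullet> (-v))" using upper H by blast
    obtain j0 where j0: "j0 < N" "(MAX j\<in>{..<N}. x j (t (2*n+2)) \<bullet> (-v)) = x j0 (t (2*n+2)) \<bullet> (-v)"
    proof -
      have "(MAX j\<in>{..<N}. x j (t (2*n+2)) \<bullet> (-v)) \<in> (\<lambda>j. x j (t (2*n+2)) \<bullet> (-v)) ` {..<N}"
        by (rule Max_in) (use ne in simp_all)
      then obtain j where "j \<in> {..<N}" "(MAX j\<in>{..<N}. x j (t (2*n+2)) \<bullet> (-v)) = x j (t (2*n+2)) \<bullet> (-v)"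
        by (rule imageE)
      thus thesis using that by blast
    qed
    have "(MIN j\<in>{..<N}. x j (t (2*n+2)) \<bullet> v) \<le> x j0 (t (2*n+2)) \<bullet> v"
      using j0 by (intro Min_le) auto
    also have "\<dots> \<le> x i s \<bullet> v" using u j0 by simp
    finally show "(MIN j\<in>{..<N}. x j (t (2*n+2)) \<bullet> v) \<le> x i s \<bullet> v" .
  qed
qed

end
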